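(* Let $L>0$, $\Omega=(-L,L)$, and let $h>0$ be a mesh size with $L/h\in\mathbb{N}$ and $L\ge 4h$. Assume there are continuous functions $f:[-L,L]\times[0,\infty)\to\mathbb{R}$, $g:[0,\infty)\to\mathbb{R}$ and a constant $K>0$ such that (i) $g(0)>0$, $g$ is strictly increasing, and with $G(s):=\int_K^s g(t)\,dt$ one has $\lim_{s\to\infty} \frac{s}{\sqrt{G(s)}}=0$; (ii) $f(x,s)\ge g(s)$ for all $s\ge K$ and all $x\in[-L,L]$. Then there exists a constant $\overline{M}$, independent of the mesh size $h$, such that every non-negative solution $u:\overline{\Omega}_h\to[0,\infty)$ of $$-\Delta_h u(x)=f(x,u(x))\ \ (x\in\Omega_h),\qquad u=0\ \text{on }\partial\Omega_h$$ satisfies $\|u\|_\infty=\max_{x\in\overline{\Omega}_h}|u(x)|\le \overline{M}$.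
   Context: For the mesh size $h>0$: $\mathbb{R}_h=h\mathbb{Z}$, $\overline{\Omega}_h=[-L,L]\cap h\mathbb{Z}$, $\Omega_h=(-L,L)\cap h\mathbb{Z}$, $\partial\Omega_h=\{-L,L\}$. The discrete Laplacian is $\Delta_h u(x)=\frac{u(x+h)-2u(x)+u(x-h)}{h^2}$ for $x\in\Omega_h$. *)

theory Defs
  imports "HOL-Analysis.Analysis"
begin

definition grid_closed :: "real \<Rightarrow> real \<Rightarrow> real set" where
  "grid_closed h L = {x. (\<exists>k::int. x = of_int k * h) \<and> -L \<le> x \<and> x \<le> L}"

definition grid_open :: "real \<Rightarrow> real \<Rightarrow> real set" where
  "grid_open h L = {x. (\<exists>k::int. x = of_int k * h) \<and> -L < x \<and> x < L}"

definition disc_lap :: "real \<Rightarrow> (real \<Rightarrow> real) \<Rightarrow> real \<Rightarrow> real" where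
  "disc_lap h u x = (u (x + h) - 2 * u x + u (x - h)) / h ^ 2"

end

theory Submission
  imports Defs
begin


lemma sbp_aux:
  fixes a p :: "nat \<Rightarrow> real"
  assumes "m \<ge> 1"
  shows "(\<Sum>k\<in>{1..<m}. (2*a k - a (k-1) - a (k+1)) * p k - a k * (2*p k - p (k-1) - p (k+1)))
     = (a (m-1) * p m - a m * p (m-1)) - (a 0 * p 1 - a 1 * p 0)"
  using assms
proof (induction m rule: nat_induct_at_least)
  case base then show ?case by simp
next
  case (Suc m)
  have "{1..<Suc m} = insert m {1..<m}" using Suc.hyps by auto
  then show ?case using Suc by (simp add: algebra_simps)
qed

lemma sbp:
  fixes a p :: "nat \<Rightarrow> real"
  assumes "n \<ge> 1" "a 0 = 0" "a n = 0" "p 0 = 0" "p n = 0"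
  shows "(\<Sum>k\<in>{1..<n}. (2*a k - a (k-1) - a (k+1)) * p k)
       = (\<Sum>k\<in>{1..<n}. a k * (2*p k - p (k-1) - p (k+1)))"
  using sbp_aux[OF assms(1), of a p] assms by (simp add: sum_subtractf)

definition Gr :: "nat \<Rightarrow> nat \<Rightarrow> nat \<Rightarrow> real" where
  "Gr n j k = real (min j k) * real (n - max j k) / real n"

lemma green_delta:
  assumes "j \<le> n" "1 \<le> k" "k < n"
  shows "2 * Gr n j k - Gr n j (k-1) - Gr n j (k+1) = (if k = j then 1 else 0)"
proof -
  have n0: "real n > 0" using assms by simp
  obtain k' where kk: "k = Suc k'" using assms by (cases k) auto
  consider "k < j" | "k = j" | "k > j" by linarith
  then show ?thesis
  proof cases
    case 1
    then have e: "min j k = k" "min j k' = k'" "min j (Suc k) = Suc k" "max j k = j" "max j k' = j" "max j (Suc k) = j"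
      using kk by auto
    show ?thesis using 1 e kk n0 by (simp add: Gr_def field_simps)
  next
    case 2
    then have e: "min j k = k" "min j k' = k'" "min j (Suc k) = j" "max j k = j" "max j k' = j" "max j (Suc k) = Suc k"
      using kk by auto
    have "real (n - Suc k) = real n - real k - 1" "real (n - j) = real n - real k" using assms 2 by (auto simp: of_nat_diff)
    then show ?thesis using 2 e kk n0 by (simp add: Gr_def field_simps)
  next
    case 3
    then have e: "min j k = j" "min j k' = j" "min j (Suc k) = j" "max j k = k" "max j k' = k'" "max j (Suc k) = Suc k"
      using kk by auto
    have "real (n - Suc k) = real n - real k - 1" "real (n - k) = real n - real k" "real (n - k') = real n - real k + 1"
      using assms kk by (auto simp: of_nat_diff)
    then show ?thesis using 3 e kk n0 by (simp add: Gr_def field_simps)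
  qed
qed

lemma green_rep:
  fixes a :: "nat \<Rightarrow> real"
  assumes "n \<ge> 1" "a 0 = 0" "a n = 0" "j \<le> n"
  shows "a j = (\<Sum>k\<in>{1..<n}. (2*a k - a (k-1) - a (k+1)) * Gr n j k)"
proof -
  have "(\<Sum>k\<in>{1..<n}. (2*a k - a (k-1) - a (k+1)) * Gr n j k)
       = (\<Sum>k\<in>{1..<n}. a k * (2*Gr n j k - Gr n j (k-1) - Gr n j (k+1)))"
    by (rule sbp) (use assms in \<open>auto simp: Gr_def\<close>)
  also have "\<dots> = (\<Sum>k\<in>{1..<n}. (if k = j then a k else 0))"
    by (rule sum.cong) (use assms green_delta in auto)
  also have "\<dots> = a j"
    using assms by (cases "j = 0") (auto simp: sum.delta)
  finally show ?thesis by simp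
qed

lemma Gr_nonneg: "Gr n j k \<ge> 0" by (simp add: Gr_def)

lemma Gr_le_P:
  assumes "k \<le> n"
  shows "Gr n j k \<le> real k * real (n - k) / real n"
proof -
  have "real (min j k) * real (n - max j k) \<le> real k * real (n - k)"
    by (rule mult_mono) auto
  then show ?thesis unfolding Gr_def by (simp add: divide_right_mono)
qed

lemma Gr_ge_P:
  assumes "k \<le> n" "j \<le> n"
  shows "real (min j (n-j)) / real n * (real k * real (n - k) / real n) \<le> Gr n j k"
proof (cases "n = 0")
  case True then show ?thesis by (simp add: Gr_def)
next
  case False
  then have n0: "real n > 0" by simp
  have key: "real (min j (n-j)) * (real k * real (n - k)) \<le> real n * (real (min j k) * real (n - max j k))"
  proof (cases "j \<le> k")
    case True
    have "real (min j (n-j)) * (real k * real (n - k)) \<le> real j * (real n * real (n - k))"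
      by (intro mult_mono) (use assms in auto)
    then show ?thesis using True by (simp add: min_def max_def algebra_simps)
  next
    case False
    have "real (min j (n-j)) * (real k * real (n - k)) \<le> real (n - j) * (real k * real n)"
      by (intro mult_mono) (use assms in auto)
    then show ?thesis using False by (simp add: min_def max_def algebra_simps)
  qed
  have "real (min j (n-j)) / real n * (real k * real (n - k) / real n)
      = (real (min j (n-j)) * (real k * real (n - k))) / (real n * real n)" by simp
  also have "\<dots> \<le> (real n * (real (min j k) * real (n - max j k))) / (real n * real n)"
    using key n0 by (intro divide_right_mono) auto
  also have "\<dots> = Gr n j k" using n0 by (simp add: Gr_def)
  finally show ?thesis .
qed

lemma Gr_le_quarter:
  assumes "k \<le> n" "j \<le> n"
  shows "Gr n j k \<le> real n / 4"
proof (cases "n = 0")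
  case True then show ?thesis by (simp add: Gr_def)
next
  case False
  then have n0: "real n > 0" by simp
  have a: "real (n - max j k) \<le> real n - real (min j k)" using assms by (auto simp: of_nat_diff)
  have "real (min j k) * real (n - max j k) \<le> real (min j k) * (real n - real (min j k))"
    using a by (intro mult_left_mono) auto
  also have "\<dots> \<le> real n ^ 2 / 4"
  proof -
    have "real (min j k) * (real n - real (min j k)) = real n ^ 2 / 4 - (real n - 2 * real (min j k))^2 / 4"
      by (simp add: power2_eq_square field_simps)
    moreover have "(real n - 2 * real (min j k))^2 \<ge> 0" by simp
    ultimately show ?thesis by linarith
  qed
  finally have "real (min j k) * real (n - max j k) \<le> real n ^ 2 / 4" .
  then show ?thesis using n0 unfolding Gr_def by (simp add: divide_simps power2_eq_square)
qed

lemma seq_main: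
  fixes a fk :: "nat \<Rightarrow> real" and N :: nat and h C Lr :: real
  assumes N2: "N \<ge> 2" and hpos: "h > 0" and Lr: "Lr = real N * h" and C0: "C \<ge> 0"
    and a0: "a 0 = 0" and an: "a (2*N) = 0"
    and eq: "\<And>k. 1 \<le> k \<Longrightarrow> k < 2*N \<Longrightarrow> h^2 * fk k = 2*a k - a (k-1) - a (k+1)"
    and fC: "\<And>k. 1 \<le> k \<Longrightarrow> k < 2*N \<Longrightarrow> fk k \<ge> -C"
  shows "\<And>j m. j \<le> 2*N \<Longrightarrow> m \<le> 2*N \<Longrightarrow>
            a j \<ge> real (min j (2*N-j)) / real (2*N) * a m - C * Lr^2"
    and "a N \<ge> h^2 * (\<Sum>k\<in>{N div 2..<N div 2 + N}. Gr (2*N) N k * (fk k + C)) - C * Lr^2"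
proof -
  define n where "n = 2*N"
  define F where "F k = fk k + C" for k
  have n1: "n \<ge> 1" using N2 by (simp add: n_def)
  have Fnn: "F k \<ge> 0" if "k \<in> {1..<n}" for k using fC[of k] that by (auto simp: F_def n_def)
  have rep: "a j = h^2 * (\<Sum>k\<in>{1..<n}. Gr n j k * F k) - C * (h^2 * (\<Sum>k\<in>{1..<n}. Gr n j k))"
    if "j \<le> n" for j
  proof -
    have "a j = (\<Sum>k\<in>{1..<n}. (2*a k - a (k-1) - a (k+1)) * Gr n j k)"
      using green_rep[OF n1, of a j] a0 an that by (simp add: n_def)
    also have "\<dots> = (\<Sum>k\<in>{1..<n}. h^2 * (Gr n j k * F k) - C * (h^2 * Gr n j k))"
    proof (rule sum.cong)
      fix k assume "k \<in> {1..<n}"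
      then have "2*a k - a (k-1) - a (k+1) = h^2 * fk k" using eq[of k] by (simp add: n_def)
      then show "(2*a k - a (k-1) - a (k+1)) * Gr n j k = h^2 * (Gr n j k * F k) - C * (h^2 * Gr n j k)"
        by (simp add: F_def algebra_simps)
    qed simp
    finally show ?thesis by (simp add: sum_subtractf sum_distrib_left)
  qed
  have Sb: "h^2 * (\<Sum>k\<in>{1..<n}. Gr n j k) \<le> Lr^2" if "j \<le> n" for j
  proof -
    have "(\<Sum>k\<in>{1..<n}. Gr n j k) \<le> real (card {1..<n}) * (real n / 4)"
      by (rule sum_bounded_above) (use Gr_le_quarter that in auto)
    also have "\<dots> \<le> real n * (real n / 4)" by (intro mult_right_mono) auto
    finally have "h^2 * (\<Sum>k\<in>{1..<n}. Gr n j k) \<le> h^2 * (real n * (real n / 4))"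
      by (intro mult_left_mono) auto
    also have "\<dots> = Lr^2" by (simp add: Lr n_def power2_eq_square)
    finally show ?thesis .
  qed
  have Sp: "0 \<le> h^2 * (\<Sum>k\<in>{1..<n}. Gr n j k)" for j by (simp add: Gr_nonneg sum_nonneg)
  define Q where "Q = h^2 * (\<Sum>k\<in>{1..<n}. real k * real (n - k) / real n * F k)"
  have TleQ: "h^2 * (\<Sum>k\<in>{1..<n}. Gr n j k * F k) \<le> Q" for j
    unfolding Q_def by (intro mult_left_mono sum_mono mult_right_mono Gr_le_P) (use Fnn in auto)
  have TgeQ: "h^2 * (\<Sum>k\<in>{1..<n}. Gr n j k * F k) \<ge> real (min j (n-j)) / real n * Q" if "j \<le> n" for j
  proof -
    have "real (min j (n-j)) / real n * Q
       = h^2 * (\<Sum>k\<in>{1..<n}. real (min j (n-j)) / real n * (real k * real (n - k) / real n) * F k)"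
      unfolding Q_def by (simp add: sum_distrib_left algebra_simps)
    also have "\<dots> \<le> h^2 * (\<Sum>k\<in>{1..<n}. Gr n j k * F k)"
      by (intro mult_left_mono sum_mono mult_right_mono Gr_ge_P) (use Fnn that in auto)
    finally show ?thesis .
  qed
  show "a j \<ge> real (min j (2*N-j)) / real (2*N) * a m - C * Lr^2" if "j \<le> 2*N" "m \<le> 2*N" for j m
  proof -
    have jm: "j \<le> n" "m \<le> n" using that by (auto simp: n_def)
    have r0: "real (min j (n-j)) / real n \<ge> 0" by simp
    have "C * (h^2 * (\<Sum>k\<in>{1..<n}. Gr n m k)) \<ge> 0" using Sp[of m] C0 by simp
    then have amQ: "a m \<le> Q" using rep[OF jm(2)] TleQ[of m] by linarith
    have "real (min j (n-j)) / real n * a m \<le> real (min j (n-j)) / real n * Q"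
      by (rule mult_left_mono[OF amQ r0])
    moreover have "a j \<ge> real (min j (n-j)) / real n * Q - C * Lr^2"
    proof -
      have "C * (h^2 * (\<Sum>k\<in>{1..<n}. Gr n j k)) \<le> C * Lr^2" using Sb[OF jm(1)] C0 by (rule mult_left_mono)
      then show ?thesis using rep[OF jm(1)] TgeQ[OF jm(1)] by linarith
    qed
    ultimately show ?thesis by (simp add: n_def)
  qed
  have sub: "{N div 2..<N div 2 + N} \<subseteq> {1..<n}" using N2 by (auto simp: n_def)
  have "(\<Sum>k\<in>{N div 2..<N div 2 + N}. Gr n N k * F k) \<le> (\<Sum>k\<in>{1..<n}. Gr n N k * F k)"
    by (rule sum_mono2) (use sub Fnn Gr_nonneg in auto)
  then have "h^2 * (\<Sum>k\<in>{N div 2..<N div 2 + N}. Gr n N k * F k) \<le> h^2 * (\<Sum>k\<in>{1..<n}. Gr n N k * F k)"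
    by (intro mult_left_mono) auto
  moreover have "a N \<ge> h^2 * (\<Sum>k\<in>{1..<n}. Gr n N k * F k) - C * Lr^2"
  proof -
    have "C * (h^2 * (\<Sum>k\<in>{1..<n}. Gr n N k)) \<le> C * Lr^2" using Sb[of N] C0 by (intro mult_left_mono) (auto simp: n_def)
    then show ?thesis using rep[of N] by (simp add: n_def)
  qed
  ultimately show "a N \<ge> h^2 * (\<Sum>k\<in>{N div 2..<N div 2 + N}. Gr (2*N) N k * (fk k + C)) - C * Lr^2"
    by (simp add: n_def F_def)
qed

lemma mid_ratio:
  assumes "N \<ge> (2::nat)" "k \<in> {N div 2..<N div 2 + N}"
  shows "real (min k (2*N - k)) / real (2*N) \<ge> 1/8"
proof -
  have "2*N \<le> 8 * min k (2*N - k)" using assms by auto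
  then have "real (2*N) \<le> 8 * real (min k (2*N - k))" by linarith
  then show ?thesis using assms by (simp add: field_simps)
qed

lemma mid_Gr:
  assumes "N \<ge> (2::nat)" "k \<in> {N div 2..<N div 2 + N}"
  shows "Gr (2*N) N k \<ge> real N / 8"
proof (cases "k \<le> N")
  case True
  then have "Gr (2*N) N k = real k / 2" using assms by (simp add: Gr_def min_def max_def)
  moreover have "4 * k \<ge> N" using assms by auto
  ultimately show ?thesis by simp
next
  case False
  then have "Gr (2*N) N k = real (2*N - k) / 2" using assms by (simp add: Gr_def min_def max_def)
  moreover have "4 * (2*N - k) \<ge> N" using assms by auto
  ultimately show ?thesis by simp
qed



lemma superlin:
  fixes K A B :: real and g :: "real \<Rightarrow> real"
  assumes g_cont: "continuous_on {0..} g" and K_pos: "K > 0" and g0: "g 0 > 0"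
    and g_mono: "strict_mono_on {0..} g"
    and G_lim: "((\<lambda>s. s / sqrt (integral {K..s} g)) \<longlongrightarrow> 0) at_top"
    and A0: "A \<ge> 0"
  shows "\<exists>S. \<forall>s\<ge>S. g s > A * s + B"
proof -
  define e where "e = 1 / (A + 1)"
  have e0: "e > 0" using A0 by (simp add: e_def)
  have "eventually (\<lambda>s. s / sqrt (integral {K..s} g) < e) at_top"
    using order_tendstoD(2)[OF G_lim e0] .
  then obtain S1 where S1: "\<And>s. s \<ge> S1 \<Longrightarrow> s / sqrt (integral {K..s} g) < e"
    by (auto simp: eventually_at_top_linorder)
  define S where "S = max S1 (max (K+1) (max B 1))"
  have "g s > A * s + B" if s: "s \<ge> S" for s
  proof -
    have sK: "s > K" "s \<ge> B" "s \<ge> 1" "s \<ge> S1" using s by (auto simp: S_def)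
    have cont: "continuous_on {K..s} g" by (rule continuous_on_subset[OF g_cont]) (use K_pos in auto)
    have int: "g integrable_on {K..s}" by (rule integrable_continuous_interval[OF cont])
    have gb: "g 0 \<le> g t" "g t \<le> g s" if "t \<in> {K..s}" for t
      using that K_pos by (auto intro!: strict_mono_on_leD[OF g_mono])
    have "integral {K..s} (\<lambda>_. g 0) \<le> integral {K..s} g"
      by (rule integral_le) (use int gb in auto)
    then have Ilow: "integral {K..s} g \<ge> (s - K) * g 0" using sK by simp
    have "integral {K..s} g \<le> integral {K..s} (\<lambda>_. g s)"
      by (rule integral_le) (use int gb in auto)
    then have Iup: "integral {K..s} g \<le> (s - K) * g s" using sK by simp
    define I where "I = integral {K..s} g"
    have I0: "I > 0" using Ilow sK g0 unfolding I_def by (smt (verit) mult_pos_pos)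
    have gs0: "g s > 0" using gb[of s] g0 sK by auto
    have "s / sqrt I < e" using S1[OF sK(4)] by (simp add: I_def)
    then have "s < e * sqrt I" using I0 by (simp add: divide_simps)
    then have "s^2 < (e * sqrt I)^2" using sK by (intro power_strict_mono) auto
    then have "s^2 < e^2 * I" using I0 by (simp add: power_mult_distrib)
    then have "s^2 * (A+1)^2 < I" using A0 by (simp add: e_def divide_simps)
    also have "I \<le> s * g s" using Iup gs0 K_pos unfolding I_def
      by (smt (verit) mult_right_mono)
    finally have "s * (s * (A+1)^2) < s * g s" by (simp add: power2_eq_square algebra_simps)
    then have "s * (A+1)^2 < g s" using sK by simp
    moreover have "s * (A+1) \<le> s * (A+1)^2" using sK A0
      by (intro mult_left_mono) (auto simp: power2_eq_square)
    ultimately show ?thesis using sK by (simp add: algebra_simps)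
  qed
  then show ?thesis by blast
qed

theorem mainTheorem1:
  fixes L K :: real and f :: "real \<Rightarrow> real \<Rightarrow> real" and g :: "real \<Rightarrow> real"
  assumes L_pos: "L > 0"
    and f_cont: "continuous_on ({-L..L} \<times> {0..}) (\<lambda>(x, s). f x s)"
    and g_cont: "continuous_on {0..} g"
    and K_pos: "K > 0"
    and g0: "g 0 > 0"
    and g_mono: "strict_mono_on {0..} g"
    and G_lim: "((\<lambda>s. s / sqrt (integral {K..s} g)) \<longlongrightarrow> 0) at_top"
    and f_ge_g: "\<And>x s. x \<in> {-L..L} \<Longrightarrow> s \<ge> K \<Longrightarrow> f x s \<ge> g s"
  shows "\<exists>M. \<forall>h u. h > 0 \<longrightarrow> (\<exists>N::nat. L = real N * h) \<longrightarrow> L \<ge> 4 * h \<longrightarrow>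
           (\<forall>x\<in>grid_closed h L. u x \<ge> 0) \<longrightarrow> u (-L) = 0 \<longrightarrow> u L = 0 \<longrightarrow>
           (\<forall>x\<in>grid_open h L. - disc_lap h u x = f x (u x)) \<longrightarrow>
           (\<forall>x\<in>grid_closed h L. \<bar>u x\<bar> \<le> M)"
proof -
  have gpos: "g s \<ge> g 0" if "s \<ge> 0" for s
    using that by (intro strict_mono_on_leD[OF g_mono]) auto
  have cpt: "compact ((\<lambda>(x, s). f x s) ` ({-L..L} \<times> {0..K}))"
    by (rule compact_continuous_image[OF continuous_on_subset[OF f_cont]])
       (auto intro: compact_Times)
  then obtain B where B: "\<And>y. y \<in> (\<lambda>(x, s). f x s) ` ({-L..L} \<times> {0..K}) \<Longrightarrow> norm y \<le> B"
    using compact_imp_bounded bounded_iff by metis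
  define C where "C = max B 0"
  have C0: "C \<ge> 0" by (simp add: C_def)
  have fC: "f x s \<ge> -C" if "x \<in> {-L..L}" "s \<ge> 0" for x s
  proof (cases "s \<le> K")
    case True
    then have "norm (f x s) \<le> B" using B[of "f x s"] that by force
    then show ?thesis by (auto simp: C_def)
  next
    case False
    then have "f x s \<ge> g s" using f_ge_g that by auto
    moreover have "g s \<ge> g 0" using gpos that by auto
    ultimately show ?thesis using g0 C0 by linarith
  qed
  obtain S1 where S1: "\<And>s. s \<ge> S1 \<Longrightarrow> g s > (64 / L^2) * s + 72 * C"
    using superlin[OF g_cont K_pos g0 g_mono G_lim, of "64 / L^2" "72 * C"] by auto
  define S0 where "S0 = max S1 K"
  have S0K: "S0 \<ge> K" by (simp add: S0_def)
  have S0g: "g s * L^2 / 8 > 8 * s + 9 * C * L^2" if "s \<ge> S0" for s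
  proof -
    have "g s > (64 / L^2) * s + 72 * C" using S1 that by (auto simp: S0_def)
    then have "g s * (L^2 / 8) > ((64 / L^2) * s + 72 * C) * (L^2 / 8)"
      using L_pos by (intro mult_strict_right_mono) auto
    moreover have "((64 / L^2) * s + 72 * C) * (L^2 / 8) = 8 * s + 9 * C * L^2"
      using L_pos by (simp add: field_simps power2_eq_square)
    ultimately show ?thesis by simp
  qed
  show ?thesis
  proof (intro exI[of _ "8 * (S0 + C * L^2)"] allI impI)
    fix h u
    assume hpos: "h > 0" and "\<exists>N::nat. L = real N * h" and L4: "L \<ge> 4 * h"
      and unn: "\<forall>x\<in>grid_closed h L. u x \<ge> 0" and uL1: "u (-L) = 0" and uL2: "u L = 0"
      and ueq: "\<forall>x\<in>grid_open h L. - disc_lap h u x = f x (u x)"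
    then obtain N :: nat where LN: "L = real N * h" by blast
    have N4: "N \<ge> 4"
    proof -
      have "real N * h \<ge> 4 * h" using L4 LN by simp
      then have "real N \<ge> 4" using hpos by simp
      then show ?thesis by linarith
    qed
    then have N2: "N \<ge> 2" by simp
    define xk where "xk k = -L + real k * h" for k :: nat
    define a where "a k = u (xk k)" for k
    define fk where "fk k = f (xk k) (a k)" for k
    have xk_int: "xk k = of_int (int k - int N) * h" for k by (simp add: xk_def LN algebra_simps)
    have xk_cl: "xk k \<in> grid_closed h L" if "k \<le> 2*N" for k
    proof -
      have "real k \<le> 2 * real N" using that by linarith
      then have "real k * h \<le> 2 * real N * h" using hpos by (intro mult_right_mono) auto
      moreover have "real k * h \<ge> 0" using hpos by simp
      ultimately have "-L \<le> xk k" "xk k \<le> L" by (auto simp: xk_def LN algebra_simps)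
      then show ?thesis unfolding grid_closed_def using xk_int[of k] by blast
    qed
    have xk_op: "xk k \<in> grid_open h L" if "1 \<le> k" "k < 2*N" for k
    proof -
      have "real k < 2 * real N" using that by linarith
      then have "real k * h < 2 * real N * h" using hpos by (intro mult_strict_right_mono) auto
      moreover have "real k * h > 0" using that hpos by simp
      ultimately have "-L < xk k" "xk k < L" by (auto simp: xk_def LN algebra_simps)
      then show ?thesis unfolding grid_open_def using xk_int[of k] by blast
    qed
    have xk_LL: "xk k \<in> {-L..L}" if "k \<le> 2*N" for k
      using xk_cl[OF that] by (simp add: grid_closed_def)
    have a_nn: "a k \<ge> 0" if "k \<le> 2*N" for k using unn xk_cl[OF that] by (simp add: a_def)
    have a0: "a 0 = 0" using uL1 by (simp add: a_def xk_def)
    have an: "a (2*N) = 0" using uL2 by (simp add: a_def xk_def LN algebra_simps)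
    have eq: "h^2 * fk k = 2*a k - a (k-1) - a (k+1)" if "1 \<le> k" "k < 2*N" for k
    proof -
      have e: "- disc_lap h u (xk k) = f (xk k) (u (xk k))" using ueq xk_op[OF that] by blast
      have p: "xk k + h = xk (k+1)" by (simp add: xk_def algebra_simps)
      have m: "xk k - h = xk (k-1)" using that by (simp add: xk_def of_nat_diff algebra_simps)
      have "h^2 * fk k = h^2 * (- disc_lap h u (xk k))" using e by (simp add: fk_def a_def)
      also have "disc_lap h u (xk k) = (a (k+1) - 2 * a k + a (k-1)) / h^2"
        unfolding disc_lap_def p m a_def by simp
      also have "h^2 * (- ((a (k+1) - 2 * a k + a (k-1)) / h^2)) = 2*a k - a (k-1) - a (k+1)" using hpos
        by (simp add: field_simps)
      finally show ?thesis .
    qed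
    have fkC: "fk k \<ge> -C" if "1 \<le> k" "k < 2*N" for k
      using fC[OF xk_LL a_nn] that by (simp add: fk_def)
    have SM1: "a j \<ge> real (min j (2*N-j)) / real (2*N) * a m - C * L^2" if "j \<le> 2*N" "m \<le> 2*N" for j m
      using seq_main(1)[where a=a and fk=fk and N=N and h=h and C=C and Lr=L] N2 hpos LN C0 a0 an eq fkC that
      by blast
    have SM2: "a N \<ge> h^2 * (\<Sum>k\<in>{N div 2..<N div 2 + N}. Gr (2*N) N k * (fk k + C)) - C * L^2"
      using seq_main(2)[where a=a and fk=fk and N=N and h=h and C=C and Lr=L] N2 hpos LN C0 a0 an eq fkC
      by blast
    define M' where "M' = Max (a ` {0..2*N})"
    have aM: "a k \<le> M'" if "k \<le> 2*N" for k using that unfolding M'_def by (intro Max_ge) auto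
    have "M' \<in> a ` {0..2*N}" unfolding M'_def by (rule Max_in) auto
    then obtain m where m: "m \<le> 2*N" "a m = M'" by auto
    have M'0: "M' \<ge> 0" using aM[of 0] a0 by simp
    have MM: "M' \<le> 8 * (S0 + C * L^2)"
    proof (rule ccontr)
      assume "\<not> ?thesis"
      then have big: "M' > 8 * (S0 + C * L^2)" by simp
      define s0 where "s0 = M' / 8 - C * L^2"
      have s0S: "s0 > S0" using big by (simp add: s0_def)
      define T where "T = {N div 2..<N div 2 + N}"
      have Tsub: "k \<le> 2*N" "1 \<le> k" "k < 2*N" if "k \<in> T" for k using that N2 by (auto simp: T_def)
      have ak: "a k \<ge> s0" if "k \<in> T" for k
      proof -
        have r: "real (min k (2*N - k)) / real (2*N) \<ge> 1/8" using mid_ratio[OF N2] that by (simp add: T_def)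
        have "real (min k (2*N - k)) / real (2*N) * M' \<ge> 1/8 * M'"
          using r M'0 by (intro mult_right_mono) auto
        moreover have "a k \<ge> real (min k (2*N - k)) / real (2*N) * M' - C * L^2"
          using SM1[OF Tsub(1)[OF that] m(1), unfolded m(2)] .
        ultimately show ?thesis using m(2) unfolding s0_def by linarith
      qed
      have tmk: "Gr (2*N) N k * (fk k + C) \<ge> real N / 8 * g s0" if "k \<in> T" for k
      proof -
        have "s0 \<ge> K" using s0S S0K by linarith
        then have "fk k \<ge> g (a k)" using f_ge_g[OF xk_LL[OF Tsub(1)[OF that]]] ak[OF that]
          by (simp add: fk_def)
        moreover have "g (a k) \<ge> g s0" using ak[OF that] \<open>s0 \<ge> K\<close> K_pos
          by (intro strict_mono_on_leD[OF g_mono]) auto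
        ultimately have "fk k + C \<ge> g s0" using C0 by linarith
        moreover have "g s0 \<ge> 0" using gpos[of s0] g0 \<open>s0 \<ge> K\<close> K_pos by auto
        moreover have "Gr (2*N) N k \<ge> real N / 8" using mid_Gr[OF N2] that by (simp add: T_def)
        ultimately show ?thesis by (intro mult_mono) auto
      qed
      have "(\<Sum>k\<in>T. Gr (2*N) N k * (fk k + C)) \<ge> (\<Sum>k\<in>T. real N / 8 * g s0)"
        by (rule sum_mono) (rule tmk)
      also have "(\<Sum>k\<in>T. real N / 8 * g s0) = real N * (real N / 8 * g s0)" by (simp add: T_def)
      finally have "h^2 * (\<Sum>k\<in>T. Gr (2*N) N k * (fk k + C)) \<ge> h^2 * (real N * (real N / 8 * g s0))"
        by (intro mult_left_mono) auto
      also have "h^2 * (real N * (real N / 8 * g s0)) = g s0 * L^2 / 8"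
        by (simp add: LN power2_eq_square)
      finally have "a N \<ge> g s0 * L^2 / 8 - C * L^2" using SM2 by (simp add: T_def)
      moreover have "g s0 * L^2 / 8 > 8 * s0 + 9 * C * L^2" using S0g s0S by simp
      moreover have "a N \<le> M'" using aM[of N] by simp
      ultimately show False by (simp add: s0_def)
    qed
    show "\<forall>x\<in>grid_closed h L. \<bar>u x\<bar> \<le> 8 * (S0 + C * L^2)"
    proof
      fix x assume x: "x \<in> grid_closed h L"
      then obtain z :: int where z: "x = of_int z * h" "-L \<le> x" "x \<le> L" by (auto simp: grid_closed_def)
      have "real_of_int (- int N) * h \<le> of_int z * h" "of_int z * h \<le> real_of_int (int N) * h"
        using z LN by auto
      then have "real_of_int (- int N) \<le> of_int z" "real_of_int z \<le> real_of_int (int N)"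
        using hpos mult_le_cancel_right_pos by blast+
      then have "- int N \<le> z" "z \<le> int N" by linarith+
      define k where "k = nat (z + int N)"
      have kk: "int k = z + int N" "k \<le> 2*N" using \<open>- int N \<le> z\<close> \<open>z \<le> int N\<close> by (auto simp: k_def)
      have "xk k = x" using xk_int[of k] kk z by simp
      then have "u x = a k" by (simp add: a_def)
      then show "\<bar>u x\<bar> \<le> 8 * (S0 + C * L^2)" using a_nn[OF kk(2)] aM[OF kk(2)] MM by simp
    qed
  qed
qed

end
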